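(* Let $\mathcal{M}$ be the set of compactly supported probability distributions on $\mathbb{R}$ and let $\mathcal{U}=\{T^u: u \text{ a utility function}\}$. Let $T:\mathcal{M}\to\mathcal{M}$ be monotone. Then $\mathcal{U}\circ T=T\circ\mathcal{U}$ if and only if $T=T_d\circ T^u$ for some distortion function $d$ and some utility function $u$ that is strictly increasing and surjective ($u(\mathbb{R})=\mathbb{R}$).
   Context: Increasing means non-decreasing. A distortion function is an increasing function $d:[0,1]\to[0,1]$ with $d(0)=0$, $d(1)=1$. A utility function is an increasing continuous $u:\mathbb{R}\to\mathbb{R}$. $T_d(F)(x)=\lim_{y\downarrow x}d(F(y))$; $T^u(F)=F\circ u^{-1}$ is the distribution of $u(X)$ when $X\sim F$. For a set $\mathcal{T}$ of maps $\mathcal{M}\to\mathcal{M}$, $\mathcal{T}\circ T=\{T'\circ T:T'\in\mathcal{T}\}$ and $T\circ\mathcal{T}=\{T\circ T':T'\in\mathcal{T}\}$. For $F,G\in\mathcal{M}$, $F\le_{\rm st}G$ means $F(x)\ge G(x)$ for all $x$; $T$ is monotone if $F\le_{\rm st}G$ implies $T(F)\le_{\rm st}T(G)$. *)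

theory Defs
  imports Complex_Main
begin

text \<open>Distributions on the real line are represented by their distribution
functions F (right-continuous, increasing).\<close>

definition Mset :: "(real \<Rightarrow> real) set" where
  "Mset = {F. mono F \<and> (\<forall>x. continuous (at_right x) F) \<and>
              (\<exists>a b. \<forall>x. (x < a \<longrightarrow> F x = 0) \<and> (b \<le> x \<longrightarrow> F x = 1))}"

definition distortion :: "(real \<Rightarrow> real) \<Rightarrow> bool" where
  "distortion d \<longleftrightarrow> mono_on {0..1} d \<and> d ` {0..1} \<subseteq> {0..1} \<and> d 0 = 0 \<and> d 1 = 1"

definition utility :: "(real \<Rightarrow> real) \<Rightarrow> bool" where
  "utility u \<longleftrightarrow> mono u \<and> continuous_on UNIV u"

definition Td :: "(real \<Rightarrow> real) \<Rightarrow> (real \<Rightarrow> real) \<Rightarrow> (real \<Rightarrow> real)" where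
  "Td d F = (\<lambda>x. Lim (at_right x) (\<lambda>y. d (F y)))"

text \<open>T^u(F) = F o u^{-1}: the distribution function of u(X) for X ~ F, i.e.
y maps to P(u(X) \<le> y) = P(X \<in> {x. u x \<le> y}); for continuous increasing u the
set {x. u x \<le> y} is empty, all of the real line, or a ray ]-inf, s] with s its supremum.\<close>
definition Tu :: "(real \<Rightarrow> real) \<Rightarrow> (real \<Rightarrow> real) \<Rightarrow> (real \<Rightarrow> real)" where
  "Tu u F = (\<lambda>y. if {x. u x \<le> y} = {} then 0
                 else if bdd_above {x. u x \<le> y} then F (Sup {x. u x \<le> y})
                 else 1)"

definition st_le :: "(real \<Rightarrow> real) \<Rightarrow> (real \<Rightarrow> real) \<Rightarrow> bool" where
  "st_le F G \<longleftrightarrow> (\<forall>x. F x \<ge> G x)"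

definition monotone_op :: "((real \<Rightarrow> real) \<Rightarrow> (real \<Rightarrow> real)) \<Rightarrow> bool" where
  "monotone_op T \<longleftrightarrow> (\<forall>F\<in>Mset. \<forall>G\<in>Mset. st_le F G \<longrightarrow> st_le (T F) (T G))"

text \<open>U o T = T o U as sets of maps M -> M (maps compared on M).\<close>
definition commutes_with_U :: "((real \<Rightarrow> real) \<Rightarrow> (real \<Rightarrow> real)) \<Rightarrow> bool" where
  "commutes_with_U T \<longleftrightarrow>
     (\<forall>u. utility u \<longrightarrow> (\<exists>v. utility v \<and> (\<forall>F\<in>Mset. Tu u (T F) = T (Tu v F)))) \<and>
     (\<forall>v. utility v \<longrightarrow> (\<exists>u. utility u \<and> (\<forall>F\<in>Mset. T (Tu v F) = Tu u (T F))))"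

end

theory Submission imports Defs "HOL-Analysis.Analysis" begin

lemma smono_surj_cont:
  fixes f :: "real \<Rightarrow> real"
  assumes sm: "strict_mono f" and su: "surj f"
  shows "continuous_on UNIV f"
proof -
  have "isCont f x" for x
    unfolding isCont_def
  proof (rule order_tendstoI)
    fix a assume "a < f x"
    obtain z where z: "a = f z" using su by (metis surjD)
    have "z < x" using \<open>a < f x\<close> z sm by (metis strict_mono_less)
    have "eventually (\<lambda>y. z < y) (at x)" using order_tendstoD(1)[OF tendsto_ident_at \<open>z < x\<close>] .
    then show "eventually (\<lambda>y. a < f y) (at x)"
      by eventually_elim (use z sm in \<open>simp add: strict_mono_less\<close>)
  next
    fix a assume "f x < a"
    obtain z where z: "a = f z" using su by (metis surjD)
    have "x < z" using \<open>f x < a\<close> z sm by (metis strict_mono_less)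
    have "eventually (\<lambda>y. y < z) (at x)" using order_tendstoD(2)[OF tendsto_ident_at \<open>x < z\<close>] .
    then show "eventually (\<lambda>y. f y < a) (at x)"
      by eventually_elim (use z sm in \<open>simp add: strict_mono_less\<close>)
  qed
  then show ?thesis by (simp add: continuous_at_imp_continuous_on)
qed

lemma smono_surj_utility:
  fixes f :: "real \<Rightarrow> real"
  assumes "strict_mono f" "surj f"
  shows "utility f" "utility (inv f)" "\<And>x. inv f (f x) = x" "\<And>x. f (inv f x) = x"
    "strict_mono (inv f)" "surj (inv f)"
proof -
  have inj: "inj f" using assms(1) strict_mono_on_imp_inj_on by blast
  show i1: "\<And>x. inv f (f x) = x" using inj by simp
  show i2: "\<And>x. f (inv f x) = x" using assms(2) by (simp add: surj_f_inv_f)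
  show sm: "strict_mono (inv f)" using strict_mono_inv[OF assms i1] .
  show su: "surj (inv f)" using i1 by (metis surjI)
  show "utility f" unfolding utility_def
    using assms smono_surj_cont strict_mono_mono by blast
  show "utility (inv f)" unfolding utility_def
    using sm su smono_surj_cont strict_mono_mono by blast
qed


lemma utilityD: "utility w \<Longrightarrow> mono w" "utility w \<Longrightarrow> continuous_on UNIV w"
  by (auto simp: utility_def)

lemma tu_empty: "(\<And>x. y < w x) \<Longrightarrow> Tu w F y = 0"
  unfolding Tu_def by (auto simp: not_le[symmetric])

lemma tu_univ: "(\<And>x. w x \<le> y) \<Longrightarrow> Tu w F y = 1"
proof -
  assume "\<And>x. w x \<le> y"
  then have "{x. w x \<le> y} = UNIV" by auto
  moreover have "\<not> bdd_above (UNIV::real set)"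
    by (metis bdd_above.unfold gt_ex iso_tuple_UNIV_I linorder_not_less)
  ultimately show ?thesis unfolding Tu_def by simp
qed

lemma tu_proper:
  assumes u: "utility w" and x1: "w x1 \<le> y" and x2: "y < w x2"
  defines "s \<equiv> Sup {x. w x \<le> y}"
  shows "w s = y" "\<And>x. w x \<le> y \<longleftrightarrow> x \<le> s" "Tu w F y = F s"
proof -
  have mo: "mono w" and co: "continuous_on UNIV w" using u by (auto simp: utility_def)
  let ?S = "{x. w x \<le> y}"
  have ne: "?S \<noteq> {}" using x1 by auto
  have bdd: "bdd_above ?S"
  proof (rule bdd_aboveI)
    fix x assume "x \<in> ?S"
    then have "w x \<le> y" by simp
    show "x \<le> x2"
    proof (rule ccontr)
      assume "\<not> x \<le> x2"
      then have "w x2 \<le> w x" using mo by (simp add: monoD)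
      then show False using \<open>w x \<le> y\<close> x2 by simp
    qed
  qed
  have cl: "closed ?S" using co by (intro closed_Collect_le) (auto intro: continuous_on_const)
  have sin: "s \<in> ?S" unfolding s_def using closed_contains_Sup[OF ne bdd cl] .
  show iff: "\<And>x. w x \<le> y \<longleftrightarrow> x \<le> s"
  proof
    fix x assume "w x \<le> y" then show "x \<le> s" unfolding s_def using bdd by (auto intro: cSup_upper)
  next
    fix x assume "x \<le> s" then have "w x \<le> w s" using mo by (simp add: monoD)
    then show "w x \<le> y" using sin by simp
  qed
  show ws: "w s = y"
  proof (rule ccontr)
    assume "w s \<noteq> y"
    then have lt: "w s < y" using sin by auto
    have "s \<le> x2" using iff x2 by (meson linorder_not_le order_less_imp_le)
    then obtain z where z: "s \<le> z" "z \<le> x2" "w z = y"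
      using IVT'[of w s y x2] lt x2 continuous_on_subset[OF co] by fastforce
    then have "z \<le> s" using iff[of z] by simp
    then show False using z lt by simp
  qed
  show "Tu w F y = F s" unfolding Tu_def s_def using ne bdd by (simp only: if_False if_True)
qed


lemma rc_mono:
  fixes g :: "real \<Rightarrow> real"
  assumes mo: "mono g" and h: "\<And>e. e > 0 \<Longrightarrow> \<exists>z>x. g z \<le> g x + e"
  shows "continuous (at_right x) g"
  unfolding continuous_within
proof (rule order_tendstoI)
  fix a assume "a < g x"
  show "eventually (\<lambda>y. a < g y) (at_right x)"
    unfolding eventually_at_right_field
  proof (intro exI[of _ "x+1"] conjI allI impI)
    fix y assume "x < y" "y < x + 1"
    then have "g x \<le> g y" using mo by (simp add: monoD)
    then show "a < g y" using \<open>a < g x\<close> by simp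
  qed simp
next
  fix b assume "g x < b"
  then obtain z where z: "z > x" "g z \<le> g x + (b - g x)/2" using h[of "(b - g x)/2"] by auto
  show "eventually (\<lambda>y. g y < b) (at_right x)"
    unfolding eventually_at_right_field
  proof (intro exI[of _ z] conjI allI impI)
    fix y assume "x < y" "y < z"
    then have "g y \<le> g z" using mo by (simp add: monoD)
    have "g z < b" using z(2) \<open>g x < b\<close> by (simp add: field_simps)
    then show "g y < b" using \<open>g y \<le> g z\<close> by simp
  qed (use z in simp)
qed

lemma rc_monoD:
  fixes g :: "real \<Rightarrow> real"
  assumes c: "continuous (at_right x) g" and e: "e > 0"
  shows "\<exists>z>x. g z \<le> g x + e"
proof -
  have "eventually (\<lambda>y. g y < g x + e) (at_right x)"
    using order_tendstoD(2)[OF c[unfolded continuous_within]] e by simp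
  then obtain b where b: "b > x" "\<And>y. x < y \<Longrightarrow> y < b \<Longrightarrow> g y < g x + e"
    unfolding eventually_at_right_field by auto
  show ?thesis using b(2)[of "(x+b)/2"] b(1) by (intro exI[of _ "(x+b)/2"]) auto
qed

lemma MsetD:
  assumes "F \<in> Mset"
  shows "mono F" "\<And>x. continuous (at_right x) F"
    "\<exists>a b. \<forall>x. (x < a \<longrightarrow> F x = 0) \<and> (b \<le> x \<longrightarrow> F x = 1)"
  using assms unfolding Mset_def by auto

lemma Mset_bounds:
  assumes "F \<in> Mset" shows "0 \<le> F x" "F x \<le> 1"
proof -
  obtain a b where ab: "\<And>x. (x < a \<longrightarrow> F x = 0) \<and> (b \<le> x \<longrightarrow> F x = 1)"
    using MsetD(3)[OF assms] by blast
  have mo: "mono F" using MsetD(1)[OF assms] .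
  have "F (min x (a - 1)) \<le> F x" using mo by (simp add: monoD)
  moreover have "F (min x (a - 1)) = 0" using ab[of "min x (a - 1)"] by simp
  ultimately show "0 \<le> F x" by simp
  have "F x \<le> F (max x b)" using mo by (simp add: monoD)
  moreover have "F (max x b) = 1" using ab[of "max x b"] by simp
  ultimately show "F x \<le> 1" by simp
qed

lemma MsetI:
  assumes "mono F" "\<And>x e. e > 0 \<Longrightarrow> \<exists>z>x. F z \<le> F x + e"
    "\<And>x. x < a \<Longrightarrow> F x = 0" "\<And>x. b \<le> x \<Longrightarrow> F x = 1"
  shows "F \<in> Mset"
  unfolding Mset_def using assms rc_mono by blast

definition delta :: "real \<Rightarrow> real \<Rightarrow> real" where
  "delta c x = (if c \<le> x then 1 else 0)"

lemma delta_Mset: "delta c \<in> Mset"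
proof (rule MsetI[where a=c and b=c])
  show "mono (delta c)" unfolding delta_def by (rule monoI) auto
  fix x e :: real assume "e > 0"
  show "\<exists>z>x. delta c z \<le> delta c x + e"
    using \<open>e > 0\<close> by (intro exI[of _ "if x < c then (x + c)/2 else x + 1"]) (auto simp: delta_def)
qed (auto simp: delta_def)

lemma delta_inj: "delta a = delta b \<Longrightarrow> a = b"
proof -
  assume h: "delta a = delta b"
  have "delta a a = delta b a" "delta a b = delta b b" using h by simp_all
  then show "a = b" unfolding delta_def by (auto split: if_splits)
qed

lemma delta_st_le: "st_le (delta a) (delta b) \<longleftrightarrow> a \<le> b"
proof
  assume "st_le (delta a) (delta b)"
  then have "delta b b \<le> delta a b" unfolding st_le_def by blast
  then show "a \<le> b" unfolding delta_def by (auto split: if_splits)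
next
  assume "a \<le> b"
  then show "st_le (delta a) (delta b)" unfolding st_le_def delta_def by auto
qed

lemma tu_const: "Tu (\<lambda>_. c) F = delta c"
proof (rule ext)
  fix y
  show "Tu (\<lambda>_. c) F y = delta c y"
  proof (cases "y < c")
    case True
    have "Tu (\<lambda>_. c) F y = 0" by (rule tu_empty) (use True in simp)
    then show ?thesis using True by (simp add: delta_def)
  next
    case False
    have "Tu (\<lambda>_. c) F y = 1" by (rule tu_univ) (use False in simp)
    then show ?thesis using False by (simp add: delta_def)
  qed
qed

lemma utility_const: "utility (\<lambda>_. c)"
  unfolding utility_def by (auto simp: mono_def intro: continuous_on_const)

lemma utility_comp: "utility a \<Longrightarrow> utility b \<Longrightarrow> utility (a \<circ> b)"
  unfolding utility_def by (auto simp: mono_def intro: continuous_on_compose2[of UNIV a UNIV b])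

lemma utility_id: "utility id" "utility (\<lambda>x. x)"
  unfolding utility_def by (auto simp: mono_def)

lemma tu_delta:
  assumes u: "utility w" shows "Tu w (delta c) = delta (w c)"
proof (rule ext)
  fix y
  have mo: "mono w" using u utilityD by blast
  show "Tu w (delta c) y = delta (w c) y"
  proof (cases "\<forall>x. y < w x")
    case True
    then have "y < w c" by simp
    have "Tu w (delta c) y = 0" by (rule tu_empty) (use True in auto)
    then show ?thesis using \<open>y < w c\<close> by (simp add: delta_def)
  next
    case False
    then obtain x1 where x1: "w x1 \<le> y" by (auto simp: not_less)
    show ?thesis
    proof (cases "\<forall>x. w x \<le> y")
      case True then show ?thesis using tu_univ[of w y] by (auto simp: delta_def)
    next
      case False
      then obtain x2 where x2: "y < w x2" by (auto simp: not_le)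
      note P = tu_proper[OF u x1 x2]
      show ?thesis using P(1) P(2)[of c] P(3) by (auto simp: delta_def)
    qed
  qed
qed

lemma tu_comp:
  assumes a: "utility a"
  shows "Tu a (Tu b F) = Tu (a \<circ> b) F"
proof (rule ext)
  fix y
  show "Tu a (Tu b F) y = Tu (a \<circ> b) F y"
  proof (cases "\<forall>x. y < a x")
    case True then show ?thesis using tu_empty[of y a] tu_empty[of y "a \<circ> b"] by auto
  next
    case False
    then obtain x1 where x1: "a x1 \<le> y" by (auto simp: not_less)
    show ?thesis
    proof (cases "\<forall>x. a x \<le> y")
      case True then show ?thesis using tu_univ[of a y] tu_univ[of "a \<circ> b" y] by auto
    next
      case False
      then obtain x2 where x2: "y < a x2" by (auto simp: not_le)
      note P = tu_proper[OF a x1 x2]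
      have eq: "{x. (a \<circ> b) x \<le> y} = {x. b x \<le> Sup {x. a x \<le> y}}" 
      proof (rule Collect_cong)
        fix x show "(a \<circ> b) x \<le> y \<longleftrightarrow> b x \<le> Sup {x. a x \<le> y}" unfolding comp_def by (rule P(2))
      qed
      have "Tu (a \<circ> b) F y = Tu b F (Sup {x. a x \<le> y})" by (simp only: Tu_def eq)
      then show ?thesis using P(3)[of "Tu b F"] by simp
    qed
  qed
qed

lemma tu_id: "Tu (\<lambda>x. x) F = F" "Tu id F = F"
proof -
  have "Tu (\<lambda>x. x) F y = F y" for y
    proof -
    have h1: "y - 1 \<le> y" and h2: "y < y + 1" by simp_all
    show ?thesis using tu_proper(3)[OF utility_id(2) h1 h2, of F] tu_proper(1)[OF utility_id(2) h1 h2] by simp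
  qed
  then show "Tu (\<lambda>x. x) F = F" by auto
  then show "Tu id F = F" by (simp add: id_def)
qed

lemma tu_st_le: "st_le F G \<Longrightarrow> st_le (Tu w F) (Tu w G)"
  unfolding st_le_def Tu_def by auto

lemma tu_zero_below:
  assumes u: "utility w" and F: "\<And>x. x < a \<Longrightarrow> F x = 0" and y: "y < w a"
  shows "Tu w F y = 0"
proof (cases "\<forall>x. y < w x")
  case True then show ?thesis by (simp add: tu_empty)
next
  case False
  then obtain x1 where x1: "w x1 \<le> y" by (auto simp: not_less)
  note P = tu_proper[OF u x1 y]
  have "Sup {x. w x \<le> y} < a" using P(2)[of a] y by auto
  then show ?thesis using P(3) F by simp
qed

lemma tu_one_above:
  assumes u: "utility w" and F: "\<And>x. b \<le> x \<Longrightarrow> F x = 1" and y: "w b \<le> y"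
  shows "Tu w F y = 1"
proof (cases "\<forall>x. w x \<le> y")
  case True then show ?thesis by (simp add: tu_univ)
next
  case False
  then obtain x2 where x2: "y < w x2" by (auto simp: not_le)
  note P = tu_proper[OF u y x2]
  have "b \<le> Sup {x. w x \<le> y}" using P(2)[of b] y by auto
  then show ?thesis using P(3) F by simp
qed


lemma tu_bounds:
  assumes "\<And>x. 0 \<le> F x" "\<And>x. F x \<le> 1"
  shows "0 \<le> Tu w F y" "Tu w F y \<le> 1"
  unfolding Tu_def using assms by auto

lemma tu_mono:
  assumes u: "utility w" and mo: "mono F" and b0: "\<And>x. 0 \<le> F x" and b1: "\<And>x. F x \<le> 1"
    and y: "y1 \<le> y2"
  shows "Tu w F y1 \<le> Tu w F y2"
proof (cases "\<forall>x. y1 < w x")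
  case True then show ?thesis using tu_empty[of y1 w F] tu_bounds[OF b0 b1] by simp
next
  case False
  then obtain x1 where x1: "w x1 \<le> y1" by (auto simp: not_less)
  show ?thesis
  proof (cases "\<forall>x. w x \<le> y1")
    case True
    then have "\<forall>x. w x \<le> y2" using y by (meson order_trans)
    then show ?thesis using tu_univ[of w y1 F] tu_univ[of w y2 F] True by simp
  next
    case False
    then obtain x2 where x2: "y1 < w x2" by (auto simp: not_le)
    note P = tu_proper[OF u x1 x2] tu_proper(3)[OF u x1 x2, of F]
    show ?thesis
    proof (cases "\<forall>x. w x \<le> y2")
      case True then show ?thesis using tu_univ[of w y2 F] P(4) b1 by simp
    next
      case False
      then obtain x3 where x3: "y2 < w x3" by (auto simp: not_le)
      have x1': "w x1 \<le> y2" using x1 y by simp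
      note Q = tu_proper[OF u x1' x3] tu_proper(3)[OF u x1' x3, of F]
      have "Sup {x. w x \<le> y1} \<le> Sup {x. w x \<le> y2}" using Q(2)[of "Sup {x. w x \<le> y1}"] P(1) y by simp
      then show ?thesis using P(4) Q(4) mo by (simp add: monoD)
    qed
  qed
qed

lemma Tu_Mset:
  assumes F: "F \<in> Mset" and u: "utility w"
  shows "Tu w F \<in> Mset"
proof -
  have mo: "mono F" and rc: "\<And>x. continuous (at_right x) F" using MsetD[OF F] by auto
  obtain a b where ab: "\<And>x. x < a \<Longrightarrow> F x = 0" "\<And>x. b \<le> x \<Longrightarrow> F x = 1"
    using MsetD(3)[OF F] by blast
  have b0: "\<And>x. 0 \<le> F x" and b1: "\<And>x. F x \<le> 1" using Mset_bounds[OF F] by auto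
  have wmo: "mono w" using u utilityD by blast
  show ?thesis
  proof (rule MsetI[where a="w a" and b="w b"])
    show "mono (Tu w F)" by (rule monoI) (rule tu_mono[OF u mo b0 b1])
  next
    fix x :: real assume "x < w a" then show "Tu w F x = 0" using tu_zero_below[OF u, where a=a and F=F] ab(1) by blast
  next
    fix x :: real assume "w b \<le> x" then show "Tu w F x = 1" using tu_one_above[OF u, where b=b and F=F] ab(2) by blast
  next
    fix y e :: real assume e: "e > 0"
    show "\<exists>z>y. Tu w F z \<le> Tu w F y + e"
    proof (cases "\<forall>x. y < w x")
      case True
      then have "y < w a" by simp
      then have "(y + w a)/2 < w a" "y < (y + w a)/2" by simp_all
      then show ?thesis using tu_zero_below[OF u, where a=a and F=F] ab(1) tu_empty[of y w F] True e
        by (intro exI[of _ "(y + w a)/2"]) auto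
    next
      case False
      then obtain x1 where x1: "w x1 \<le> y" by (auto simp: not_less)
      show ?thesis
      proof (cases "\<forall>x. w x \<le> y")
        case True
        then have "\<forall>x. w x \<le> y + 1" by (meson add_increasing2 order_trans zero_le_one order_refl)
        then show ?thesis using tu_univ[of w y F] tu_univ[of w "y+1" F] True e
          by (intro exI[of _ "y + 1"]) auto
      next
        case False
        then obtain x2 where x2: "y < w x2" by (auto simp: not_le)
        note P = tu_proper[OF u x1 x2] tu_proper(3)[OF u x1 x2, of F]
        define s where "s = Sup {x. w x \<le> y}"
        obtain z0 where z0: "z0 > s" "F z0 \<le> F s + e" using rc_monoD[OF rc e] by blast
        have wz0: "y < w z0" using P(2)[of z0] z0(1) s_def by auto
        define y' where "y' = (y + w z0)/2"
        have y': "y < y'" "y' < w z0" using wz0 unfolding y'_def by simp_all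
        have x1': "w x1 \<le> y'" using x1 y' by simp
        note Q = tu_proper[OF u x1' y'(2)] tu_proper(3)[OF u x1' y'(2), of F]
        have "Sup {x. w x \<le> y'} \<le> z0" using Q(2)[of z0] y' by simp
        then have "Tu w F y' \<le> F z0" using Q(4) mo by (simp add: monoD)
        then show ?thesis using y' z0 P(4) s_def by (intro exI[of _ y']) auto
      qed
    qed
  qed
qed

definition Rl :: "(real \<Rightarrow> real) \<Rightarrow> real \<Rightarrow> real" where
  "Rl h x = Inf (h ` {x<..})"

lemma Rl_bdd: "(\<And>x. 0 \<le> h x) \<Longrightarrow> bdd_below (h ` {x<..})"
  by (rule bdd_belowI[of _ 0]) auto

lemma Rl_ne: "h ` {(x::real)<..} \<noteq> {}"
proof -
  have "h (x+1) \<in> h ` {x<..}" by simp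
  then show ?thesis by blast
qed

lemma Rl_le: "(\<And>x. 0 \<le> h x) \<Longrightarrow> x < y \<Longrightarrow> Rl h x \<le> h y"
  unfolding Rl_def by (rule cInf_lower) (auto intro: Rl_bdd)

lemma Rl_ge: "(\<And>y. x < y \<Longrightarrow> c \<le> h y) \<Longrightarrow> c \<le> Rl h x"
  unfolding Rl_def by (rule cInf_greatest[OF Rl_ne]) auto

lemma Rl_approx:
  assumes "\<And>x. 0 \<le> h x" "e > 0"
  shows "\<exists>y>x. h y < Rl h x + e"
proof -
  have "Inf (h ` {x<..}) < Rl h x + e" using assms(2) unfolding Rl_def by simp
  then obtain v where "v \<in> h ` {x<..}" "v < Rl h x + e" using cInf_lessD[OF Rl_ne] by blast
  then show ?thesis by auto
qed

lemma Lim_Rl: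
  assumes mo: "mono h" and b0: "\<And>x. 0 \<le> h x"
  shows "Lim (at_right x) h = Rl h x"
proof (rule tendsto_Lim[OF trivial_limit_at_right_real])
  show "(h \<longlongrightarrow> Rl h x) (at_right x)"
  proof (rule order_tendstoI)
    fix a assume a: "a < Rl h x"
    show "eventually (\<lambda>y. a < h y) (at_right x)"
      unfolding eventually_at_right_field
    proof (intro exI[of _ "x+1"] conjI allI impI)
      fix y assume "x < y" "y < x + 1"
      then have "Rl h x \<le> h y" by (intro Rl_le b0)
      then show "a < h y" using a by simp
    qed simp
  next
    fix b assume b: "Rl h x < b"
    obtain y0 where y0: "y0 > x" "h y0 < b" using Rl_approx[of h "b - Rl h x" x] b0 b by auto
    show "eventually (\<lambda>y. h y < b) (at_right x)"
      unfolding eventually_at_right_field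
    proof (intro exI[of _ y0] conjI allI impI)
      fix y assume "x < y" "y < y0"
      then have "h y \<le> h y0" using mo by (simp add: monoD)
      then show "h y < b" using y0 by simp
    qed (use y0 in simp)
  qed
qed

lemma Rl_Mset:
  assumes mo: "mono h" and b0: "\<And>x. 0 \<le> h x" and b1: "\<And>x. h x \<le> 1"
    and za: "\<And>x. x < a \<Longrightarrow> h x = 0" and ob: "\<And>x. b \<le> x \<Longrightarrow> h x = 1"
  shows "Rl h \<in> Mset"
proof (rule MsetI[where a=a and b=b])
  show "mono (Rl h)"
  proof (rule monoI)
    fix x1 x2 :: real assume "x1 \<le> x2"
    show "Rl h x1 \<le> Rl h x2" by (rule Rl_ge) (use \<open>x1 \<le> x2\<close> in \<open>auto intro: Rl_le[of h, OF b0]\<close>)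
  qed
next
  fix x e :: real assume e: "e > 0"
  obtain y where y: "y > x" "h y < Rl h x + e" using Rl_approx[of h e x] b0 e by blast
  have "Rl h ((x+y)/2) \<le> h y" using Rl_le[of h, OF b0] y by simp
  then show "\<exists>z>x. Rl h z \<le> Rl h x + e" using y by (intro exI[of _ "(x+y)/2"]) auto
next
  fix x :: real assume x: "x < a"
  have "Rl h x \<le> h ((x+a)/2)" using Rl_le[of h, OF b0] x by simp
  moreover have "h ((x+a)/2) = 0" using za x by simp
  moreover have "0 \<le> Rl h x" using b0 by (intro Rl_ge) auto
  ultimately show "Rl h x = 0" by simp
next
  fix x :: real assume x: "b \<le> x"
  have "Rl h x \<le> h (x+1)" using Rl_le[of h, OF b0] by simp
  moreover have "h (x+1) = 1" using ob x by simp
  moreover have "1 \<le> Rl h x" using ob x by (intro Rl_ge) auto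
  ultimately show "Rl h x = 1" by simp
qed

lemma distortion_comp:
  assumes d: "distortion d" and F: "F \<in> Mset"
  shows "mono (\<lambda>x. d (F x))" "\<And>x. 0 \<le> d (F x)" "\<And>x. d (F x) \<le> 1"
proof -
  have b: "\<And>x. F x \<in> {0..1}" using Mset_bounds[OF F] by auto
  have mo: "mono_on {0..1} d" and r: "d ` {0..1} \<subseteq> {0..1}" using d unfolding distortion_def by auto
  show "mono (\<lambda>x. d (F x))"
    by (rule monoI) (use b MsetD(1)[OF F] in \<open>auto intro: mono_onD[OF mo] simp: monoD\<close>)
  have "\<And>x. d (F x) \<in> {0..1}" using r b by blast
  then show "\<And>x. 0 \<le> d (F x)" "\<And>x. d (F x) \<le> 1" by auto
qed

lemma Td_Rl:
  assumes d: "distortion d" and F: "F \<in> Mset"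
  shows "Td d F = Rl (\<lambda>x. d (F x))"
  unfolding Td_def using Lim_Rl[OF distortion_comp(1,2)[OF d F]] by auto


lemma d_tu: "d 0 = 0 \<Longrightarrow> d 1 = 1 \<Longrightarrow> (\<lambda>y. d (Tu w G y)) = Tu w (\<lambda>x. d (G x))"
  by (rule ext) (simp add: Tu_def)

lemma Rl_Tu_comm:
  assumes u: "utility w" and mo: "mono h" and b0: "\<And>x. 0 \<le> h x" and b1: "\<And>x. h x \<le> 1"
    and za: "\<And>x. x < a \<Longrightarrow> h x = 0"
  shows "Rl (Tu w h) y = Tu w (Rl h) y"
proof -
  have tb0: "\<And>y. 0 \<le> Tu w h y" and tb1: "\<And>y. Tu w h y \<le> 1" using tu_bounds[OF b0 b1] by auto
  have wmo: "mono w" using u utilityD by blast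
  show ?thesis
  proof (cases "\<forall>x. y < w x")
    case True
    then have ya: "y < w a" by simp
    have "Rl (Tu w h) y \<le> Tu w h ((y + w a)/2)" using ya by (intro Rl_le[of "Tu w h", OF tb0]) simp
    also have "\<dots> = 0" using tu_zero_below[OF u, where a=a and F=h] za ya by simp
    finally have "Rl (Tu w h) y \<le> 0" .
    moreover have "0 \<le> Rl (Tu w h) y" using tb0 by (intro Rl_ge) auto
    ultimately show ?thesis using tu_empty[of y w "Rl h"] True by simp
  next
    case False
    then obtain x1 where x1: "w x1 \<le> y" by (auto simp: not_less)
    show ?thesis
    proof (cases "\<forall>x. w x \<le> y")
      case True
      have "\<And>y'. y < y' \<Longrightarrow> Tu w h y' = 1"
        by (rule tu_univ) (use True in \<open>meson less_imp_le order_trans\<close>)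
      then have "Rl (Tu w h) y = 1"
        using Rl_le[of "Tu w h", OF tb0, of y "y+1"] Rl_ge[of y 1 "Tu w h"] by force
      then show ?thesis using tu_univ[of w y "Rl h"] True by simp
    next
      case False
      then obtain x2 where x2: "y < w x2" by (auto simp: not_le)
      note P = tu_proper[OF u x1 x2] tu_proper(3)[OF u x1 x2, of "Rl h"]
      define s where "s = Sup {x. w x \<le> y}"
      have rhs: "Tu w (Rl h) y = Rl h s" using P(4) s_def by simp
      have ge: "Rl h s \<le> Rl (Tu w h) y"
      proof (rule Rl_ge)
        fix y' assume y': "y < y'"
        show "Rl h s \<le> Tu w h y'"
        proof (cases "\<forall>x. w x \<le> y'")
          case True
          have "Rl h s \<le> h (s+1)" by (intro Rl_le[of h, OF b0]) simp
          also have "\<dots> \<le> 1" by (rule b1)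
          finally show ?thesis using tu_univ[of w y' h] True by simp
        next
          case False
          then obtain x3 where x3: "y' < w x3" by (auto simp: not_le)
          have x1': "w x1 \<le> y'" using x1 y' by simp
          note Q = tu_proper[OF u x1' x3] tu_proper(3)[OF u x1' x3, of h]
          have "s < Sup {x. w x \<le> y'}"
          proof (rule ccontr)
            assume "\<not> s < Sup {x. w x \<le> y'}"
            then have "w (Sup {x. w x \<le> y'}) \<le> w s" using wmo by (simp add: monoD)
            then show False using Q(1) P(1) y' s_def by simp
          qed
          then show ?thesis using Q(4) by (simp add: Rl_le[of h, OF b0])
        qed
      qed
      have le: "Rl (Tu w h) y \<le> Rl h s"
      proof (rule Rl_ge)
        fix z assume z: "s < z"
        have wz: "y < w z" using P(2)[of z] z s_def by auto
        define y' where "y' = (y + w z)/2"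
        have y': "y < y'" "y' < w z" using wz unfolding y'_def by simp_all
        have x1': "w x1 \<le> y'" using x1 y' by simp
        note Q = tu_proper[OF u x1' y'(2)] tu_proper(3)[OF u x1' y'(2), of h]
        have "Sup {x. w x \<le> y'} \<le> z" using Q(2)[of z] y' by simp
        then have "Tu w h y' \<le> h z" using Q(4) mo by (simp add: monoD)
        moreover have "Rl (Tu w h) y \<le> Tu w h y'" using y' by (intro Rl_le[of "Tu w h", OF tb0])
        ultimately show "Rl (Tu w h) y \<le> h z" by simp
      qed
      show ?thesis using ge le rhs by simp
    qed
  qed
qed

lemma Td_Tu_comm:
  assumes d: "distortion d" and G: "G \<in> Mset" and u: "utility w"
  shows "Td d (Tu w G) = Tu w (Td d G)"
proof -
  have d01: "d 0 = 0" "d 1 = 1" using d unfolding distortion_def by auto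
  obtain a b where ab: "\<And>x. x < a \<Longrightarrow> G x = 0" "\<And>x. b \<le> x \<Longrightarrow> G x = 1"
    using MsetD(3)[OF G] by blast
  note h = distortion_comp[OF d G]
  have "Td d (Tu w G) = Rl (\<lambda>x. d (Tu w G x))" by (rule Td_Rl[OF d Tu_Mset[OF G u]])
  also have "\<dots> = Rl (Tu w (\<lambda>x. d (G x)))" using d_tu[of d w G, OF d01] by simp
  also have "\<dots> = Tu w (Rl (\<lambda>x. d (G x)))"
    by (rule ext, rule Rl_Tu_comm[OF u h(1), where a=a]) (use h ab d01 in auto)
  also have "\<dots> = Tu w (Td d G)" using Td_Rl[OF d G] by simp
  finally show ?thesis .
qed


lemma theorem3_rev:
  fixes T :: "(real \<Rightarrow> real) \<Rightarrow> (real \<Rightarrow> real)"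
  assumes d: "distortion d" and u: "utility u" "strict_mono u" "surj u"
    and TF: "\<forall>F\<in>Mset. T F = Td d (Tu u F)"
  shows "commutes_with_U T"
proof -
  note S = smono_surj_utility[OF u(2,3)]
  let ?p = "inv u"
  have A: "\<exists>v. utility v \<and> (\<forall>F\<in>Mset. Tu w (T F) = T (Tu v F))" if w: "utility w" for w
  proof (intro exI[of _ "?p \<circ> w \<circ> u"] conjI ballI)
    show "utility (?p \<circ> w \<circ> u)" using S(2) w u(1) by (intro utility_comp)
    fix F assume F: "F \<in> Mset"
    have uv: "u \<circ> (?p \<circ> w \<circ> u) = w \<circ> u" by (rule ext) (simp add: S(4))
    have "T (Tu (?p \<circ> w \<circ> u) F) = Td d (Tu u (Tu (?p \<circ> w \<circ> u) F))"
      using TF Tu_Mset[OF F \<open>utility (?p \<circ> w \<circ> u)\<close>] by simp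
    also have "\<dots> = Td d (Tu w (Tu u F))" using tu_comp[OF u(1)] tu_comp[OF w] uv by simp
    also have "\<dots> = Tu w (Td d (Tu u F))" by (rule Td_Tu_comm[OF d Tu_Mset[OF F u(1)] w])
    also have "\<dots> = Tu w (T F)" using TF F by simp
    finally show "Tu w (T F) = T (Tu (?p \<circ> w \<circ> u) F)" by simp
  qed
  have B: "\<exists>w. utility w \<and> (\<forall>F\<in>Mset. T (Tu v F) = Tu w (T F))" if v: "utility v" for v
  proof (intro exI[of _ "u \<circ> v \<circ> ?p"] conjI ballI)
    show w: "utility (u \<circ> v \<circ> ?p)" using S(2) v u(1) by (intro utility_comp)
    fix F assume F: "F \<in> Mset"
    have uv: "u \<circ> v = (u \<circ> v \<circ> ?p) \<circ> u" by (rule ext) (simp add: S(3))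
    have "T (Tu v F) = Td d (Tu u (Tu v F))"
      using TF Tu_Mset[OF F v] by simp
    also have "\<dots> = Td d (Tu (u \<circ> v \<circ> ?p) (Tu u F))" using tu_comp[OF u(1)] tu_comp[OF w] uv by simp
    also have "\<dots> = Tu (u \<circ> v \<circ> ?p) (Td d (Tu u F))" by (rule Td_Tu_comm[OF d Tu_Mset[OF F u(1)] w])
    also have "\<dots> = Tu (u \<circ> v \<circ> ?p) (T F)" using TF F by simp
    finally show "T (Tu v F) = Tu (u \<circ> v \<circ> ?p) (T F)" .
  qed
  show ?thesis unfolding commutes_with_U_def using A B by blast
qed


definition Bp :: "real \<Rightarrow> real \<Rightarrow> real" where
  "Bp p x = (if x < 0 then 0 else if x < 1 then p else 1)"

lemma Bp_Mset: "0 \<le> p \<Longrightarrow> p \<le> 1 \<Longrightarrow> Bp p \<in> Mset"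
proof (rule MsetI[where a=0 and b=1])
  assume p: "0 \<le> p" "p \<le> 1"
  show "mono (Bp p)" unfolding Bp_def using p by (intro monoI) auto
  fix x e :: real assume "e > 0"
  show "\<exists>z>x. Bp p z \<le> Bp p x + e"
    using \<open>e > 0\<close>
    by (intro exI[of _ "if x < 0 then x/2 else if x < 1 then (x + 1)/2 else x + 1"]) (auto simp: Bp_def)
qed (auto simp: Bp_def)

lemma Bp_0: "Bp 0 = delta 1" and Bp_1: "Bp 1 = delta 0"
  by (auto simp: Bp_def delta_def fun_eq_iff)

lemma ramp_utility:
  assumes e: "(e::real) > 0"
  shows "utility (\<lambda>t. max 0 (min 1 ((t - x) / e)))"
  unfolding utility_def
proof
  show "mono (\<lambda>t. max 0 (min 1 ((t - x) / e)))"
    by (rule monoI) (use e in \<open>auto simp: divide_right_mono max.coboundedI2 min.coboundedI2 intro!: max.mono min.mono\<close>)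
  show "continuous_on UNIV (\<lambda>t. max 0 (min 1 ((t - x) / e)))"
    using e by (intro continuous_intros) auto
qed

lemma ramp_tu0:
  assumes e: "(e::real) > 0"
  shows "Tu (\<lambda>t. max 0 (min 1 ((t - x) / e))) G 0 = G x"
proof -
  let ?v = "\<lambda>t. max 0 (min 1 ((t - x) / e))"
  have x1: "?v x \<le> 0" by simp
  have x2: "0 < ?v (x + e)" using e by simp
  note P = tu_proper[OF ramp_utility[OF e] x1 x2] tu_proper(3)[OF ramp_utility[OF e] x1 x2, of G]
  define s where "s = Sup {t. ?v t \<le> 0}"
  have "x \<le> s" using P(2)[of x] s_def by simp
  moreover have "\<not> x < s"
  proof
    assume "x < s"
    then have "0 < ?v s" using e by (simp add: field_simps)
    then show False using P(1) s_def by simp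
  qed
  ultimately have "s = x" by simp
  then show ?thesis using P(4) s_def by simp
qed

lemma ramp_sandwich:
  assumes e: "(e::real) > 0" and F: "F \<in> Mset"
  shows "Bp (F x) t \<le> Tu (\<lambda>t. max 0 (min 1 ((t - x) / e))) F t"
        "Tu (\<lambda>t. max 0 (min 1 ((t - x) / e))) F t \<le> Bp (F (x + e)) t"
proof -
  let ?v = "\<lambda>t. max 0 (min 1 ((t - x) / e))"
  have u: "utility ?v" by (rule ramp_utility[OF e])
  have mo: "mono F" using MsetD(1)[OF F] .
  have "Bp (F x) t \<le> Tu ?v F t \<and> Tu ?v F t \<le> Bp (F (x + e)) t"
  proof (cases "t < 0")
    case True
    have "Tu ?v F t = 0" by (rule tu_empty) (use True in auto)
    then show ?thesis using True by (simp add: Bp_def)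
  next
    case False
    show ?thesis
    proof (cases "t < 1")
      case False
      have "Tu ?v F t = 1" by (rule tu_univ) (use False in auto)
      then show ?thesis using False by (simp add: Bp_def)
    next
      case True
      have x1: "?v x \<le> t" using \<open>\<not> t < 0\<close> by simp
      have x2: "t < ?v (x + e)" using e True by simp
      note P = tu_proper[OF u x1 x2] tu_proper(3)[OF u x1 x2, of F]
      define s where "s = Sup {y. ?v y \<le> t}"
      have "x \<le> s" using P(2)[of x] x1 s_def by simp
      moreover have "s \<le> x + e"
      proof (rule ccontr)
        assume "\<not> s \<le> x + e"
        then have "1 \<le> ?v s" using e by (simp add: field_simps)
        then show False using P(1) s_def True by simp
      qed
      ultimately have "F x \<le> F s" "F s \<le> F (x + e)" using mo by (auto simp: monoD)
      then show ?thesis using P(4) s_def True \<open>\<not> t < 0\<close> by (simp add: Bp_def)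
    qed
  qed
  then show "Bp (F x) t \<le> Tu ?v F t" "Tu ?v F t \<le> Bp (F (x + e)) t" by auto
qed


lemma theorem3_fwd:
  fixes T :: "(real \<Rightarrow> real) \<Rightarrow> (real \<Rightarrow> real)"
  assumes TM: "T ` Mset \<subseteq> Mset" and mon: "monotone_op T" and C: "commutes_with_U T"
  shows "\<exists>d u. distortion d \<and> utility u \<and> strict_mono u \<and> surj u \<and>
                (\<forall>F\<in>Mset. T F = Td d (Tu u F))"
proof -
  have CA: "\<And>u. utility u \<Longrightarrow> \<exists>v. utility v \<and> (\<forall>F\<in>Mset. Tu u (T F) = T (Tu v F))"
   and CB: "\<And>v. utility v \<Longrightarrow> \<exists>u. utility u \<and> (\<forall>F\<in>Mset. T (Tu v F) = Tu u (T F))"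
    using C unfolding commutes_with_U_def by blast+
  have TMs: "\<And>F. F \<in> Mset \<Longrightarrow> T F \<in> Mset" using TM by blast
  have monT: "\<And>F G. F \<in> Mset \<Longrightarrow> G \<in> Mset \<Longrightarrow> st_le F G \<Longrightarrow> st_le (T F) (T G)"
    using mon unfolding monotone_op_def by blast
  have s1a: "\<exists>a. T (delta a) = delta c" for c
  proof -
    obtain v where v: "utility v" "\<forall>F\<in>Mset. Tu (\<lambda>_. c) (T F) = T (Tu v F)"
      using CA[OF utility_const] by blast
    have "delta c = T (Tu v (delta 0))" using v(2) delta_Mset tu_const by metis
    then show ?thesis using tu_delta[OF v(1)] by metis
  qed
  have s1b: "\<exists>c. T (delta a) = delta c" for a
  proof -
    obtain u where u: "utility u" "\<forall>F\<in>Mset. T (Tu (\<lambda>_. a) F) = Tu u (T F)"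
      using CB[OF utility_const] by blast
    obtain b where b: "T (delta b) = delta 0" using s1a by blast
    have "T (delta a) = Tu u (T (delta b))" using u(2) delta_Mset tu_const by metis
    then show ?thesis using b tu_delta[OF u(1)] by metis
  qed
  define phi where "phi a = (THE c. T (delta a) = delta c)" for a
  have phi: "T (delta a) = delta (phi a)" for a
  proof -
    obtain c where c: "T (delta a) = delta c" using s1b by blast
    have "(THE c. T (delta a) = delta c) = c" using c delta_inj by (intro the_equality) auto
    then show ?thesis using c phi_def by simp
  qed
  have phimono: "mono phi"
  proof (rule monoI)
    fix a b :: real assume "a \<le> b"
    then have "st_le (delta a) (delta b)" by (simp add: delta_st_le)
    then have "st_le (T (delta a)) (T (delta b))" by (intro monT delta_Mset)
    then show "phi a \<le> phi b" using phi delta_st_le by metis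
  qed
  have phisurj: "surj phi"
  proof -
    have "c \<in> range phi" for c
    proof -
      obtain a where "T (delta a) = delta c" using s1a by blast
      then have "phi a = c" using phi delta_inj by metis
      then show ?thesis by blast
    qed
    then show ?thesis by blast
  qed
  have conj: "\<exists>u. utility u \<and> (\<forall>F\<in>Mset. T (Tu v F) = Tu u (T F)) \<and> (\<forall>x. phi (v x) = u (phi x))"
    if v: "utility v" for v
  proof -
    obtain u where u: "utility u" "\<forall>F\<in>Mset. T (Tu v F) = Tu u (T F)" using CB[OF v] by blast
    have "phi (v x) = u (phi x)" for x
    proof -
      have "delta (phi (v x)) = T (Tu v (delta x))" using phi tu_delta[OF v] by simp
      also have "\<dots> = Tu u (T (delta x))" using u(2) delta_Mset by blast
      also have "\<dots> = delta (u (phi x))" using phi tu_delta[OF u(1)] by simp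
      finally show ?thesis by (rule delta_inj)
    qed
    then show ?thesis using u by blast
  qed
  have phiinj: "phi a \<noteq> phi b" if ab: "a < b" for a b
  proof
    assume eq: "phi a = phi b"
    obtain z where z: "phi z = phi a + 1" using phisurj by (metis surjD)
    have za: "a < z"
    proof (rule ccontr)
      assume "\<not> a < z"
      then have "phi z \<le> phi a" using phimono by (simp add: monoD)
      then show False using z by simp
    qed
    define v where "v x = a + (x - a) * ((z - a) / (b - a))" for x
    have k: "(z - a) / (b - a) > 0" using za ab by simp
    have vu: "utility v" unfolding utility_def v_def
    proof
      show "mono (\<lambda>x. a + (x - a) * ((z - a) / (b - a)))"
      proof (rule monoI)
        fix x y :: real assume "x \<le> y"
        then have "(x - a) * ((z - a) / (b - a)) \<le> (y - a) * ((z - a) / (b - a))"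
          using k by (intro mult_right_mono) auto
        then show "a + (x - a) * ((z - a) / (b - a)) \<le> a + (y - a) * ((z - a) / (b - a))" by simp
      qed
      show "continuous_on UNIV (\<lambda>x. a + (x - a) * ((z - a) / (b - a)))"
        by (intro continuous_intros)
    qed
    have va: "v a = a" and vb: "v b = z" using ab by (simp_all add: v_def)
    obtain u where u: "\<forall>x. phi (v x) = u (phi x)" using conj[OF vu] by blast
    have "phi a = u (phi a)" using u[rule_format, of a] va by simp
    moreover have "phi z = u (phi b)" using u[rule_format, of b] vb by simp
    ultimately show False using eq z by simp
  qed
  have phism: "strict_mono phi"
  proof (rule strict_monoI)
    fix a b :: real assume "a < b"
    then show "phi a < phi b" using phimono phiinj[of a b] by (simp add: monoD order_less_le)
  qed
  note S = smono_surj_utility[OF phism phisurj]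
  let ?p = "inv phi"
  define T' where "T' F = T (Tu ?p F)" for F
  have T'M: "T' F \<in> Mset" if "F \<in> Mset" for F
    unfolding T'_def by (intro TMs Tu_Mset that S(2))
  have T'mon: "st_le (T' F) (T' G)" if "F \<in> Mset" "G \<in> Mset" "st_le F G" for F G
    unfolding T'_def by (intro monT Tu_Mset that S(2) tu_st_le)
  have T'delta: "T' (delta a) = delta a" for a
    unfolding T'_def using tu_delta[OF S(2)] phi S(4) by simp
  have T'comm: "T' (Tu v F) = Tu v (T' F)" if v: "utility v" and F: "F \<in> Mset" for v F
  proof -
    define w where "w = ?p \<circ> v \<circ> phi"
    have wu: "utility w" unfolding w_def using S(1,2) v by (intro utility_comp)
    obtain u where u: "utility u" "\<forall>G\<in>Mset. T (Tu w G) = Tu u (T G)" "\<forall>x. phi (w x) = u (phi x)"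
      using conj[OF wu] by blast
    have uv: "u = v"
    proof
      fix y
      have "u y = u (phi (?p y))" using S(4) by simp
      also have "\<dots> = phi (w (?p y))" using u(3) by simp
      also have "\<dots> = v y" unfolding w_def using S(4) by simp
      finally show "u y = v y" .
    qed
    have pw: "?p \<circ> v = w \<circ> ?p" unfolding w_def by (rule ext) (simp add: S(4))
    have "T' (Tu v F) = T (Tu (?p \<circ> v) F)" unfolding T'_def using tu_comp[OF S(2)] by simp
    also have "\<dots> = T (Tu w (Tu ?p F))" using pw tu_comp[OF wu] by simp
    also have "\<dots> = Tu u (T (Tu ?p F))" using u(2) Tu_Mset[OF F S(2)] by blast
    also have "\<dots> = Tu v (T' F)" unfolding T'_def uv ..
    finally show ?thesis .
  qed
  define d where "d p = T' (Bp p) 0" for p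
  have Bst: "st_le (Bp q) (Bp p)" if "p \<le> q" for p q
    unfolding st_le_def Bp_def using that by auto
  have dd: "distortion d"
    unfolding distortion_def
  proof (intro conjI)
    show "mono_on {0..1} d"
    proof (rule mono_onI)
      fix p q :: real assume "p \<in> {0..1}" "q \<in> {0..1}" "p \<le> q"
      then have "st_le (T' (Bp q)) (T' (Bp p))" by (intro T'mon Bp_Mset Bst) auto
      then show "d p \<le> d q" unfolding d_def st_le_def by blast
    qed
    show "d ` {0..1} \<subseteq> {0..1}"
    proof
      fix y assume "y \<in> d ` {0..1}"
      then obtain p where p: "p \<in> {0..1}" "y = d p" by blast
      then have "T' (Bp p) \<in> Mset" by (intro T'M Bp_Mset) auto
      then show "y \<in> {0..1}" using Mset_bounds p unfolding d_def by auto
    qed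
    show "d 0 = 0" unfolding d_def Bp_0 T'delta by (simp add: delta_def)
    show "d 1 = 1" unfolding d_def Bp_1 T'delta by (simp add: delta_def)
  qed
  have sand: "d (F x) \<le> T' F x \<and> T' F x \<le> d (F y)" if F: "F \<in> Mset" and xy: "x < y" for F x y
  proof -
    define e where "e = y - x"
    have e: "e > 0" using xy e_def by simp
    let ?v = "\<lambda>t. max 0 (min 1 ((t - x) / e))"
    have vu: "utility ?v" by (rule ramp_utility[OF e])
    have b: "0 \<le> F x" "F x \<le> 1" "0 \<le> F y" "F y \<le> 1" using Mset_bounds[OF F] by auto
    have TvF: "Tu ?v F \<in> Mset" by (rule Tu_Mset[OF F vu])
    have key: "T' (Tu ?v F) 0 = T' F x"
      using T'comm[OF vu F] ramp_tu0[OF e, of x "T' F"] by simp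
    have "st_le (Tu ?v F) (Bp (F x))"
      unfolding st_le_def using ramp_sandwich(1)[OF e F] by blast
    then have "st_le (T' (Tu ?v F)) (T' (Bp (F x)))" by (intro T'mon TvF Bp_Mset b)
    then have l: "d (F x) \<le> T' F x" using key unfolding st_le_def d_def by metis
    have "st_le (Bp (F y)) (Tu ?v F)"
      unfolding st_le_def using ramp_sandwich(2)[OF e F, of x] e_def by simp
    then have "st_le (T' (Bp (F y))) (T' (Tu ?v F))" by (intro T'mon TvF Bp_Mset b)
    then have r: "T' F x \<le> d (F y)" using key unfolding st_le_def d_def by metis
    show ?thesis using l r by simp
  qed
  have T'Td: "T' F = Td d F" if F: "F \<in> Mset" for F
  proof
    fix x
    note h = distortion_comp[OF dd F]
    have "T' F x = Rl (\<lambda>y. d (F y)) x"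
    proof (rule antisym)
      show "T' F x \<le> Rl (\<lambda>y. d (F y)) x" by (rule Rl_ge) (use sand[OF F] in blast)
      show "Rl (\<lambda>y. d (F y)) x \<le> T' F x"
      proof (rule field_le_epsilon)
        fix e :: real assume e: "0 < e"
        obtain z where z: "z > x" "T' F z \<le> T' F x + e"
          using rc_monoD[OF MsetD(2)[OF T'M[OF F]] e] by blast
        have "Rl (\<lambda>y. d (F y)) x \<le> d (F z)" using z(1) by (intro Rl_le[of "\<lambda>y. d (F y)", OF h(2)])
        also have "\<dots> \<le> T' F z" using sand[OF F, of z "z+1"] by simp
        finally show "Rl (\<lambda>y. d (F y)) x \<le> T' F x + e" using z(2) by simp
      qed
    qed
    then show "T' F x = Td d F x" using Td_Rl[OF dd F] by simp
  qed
  have final: "T F = Td d (Tu phi F)" if F: "F \<in> Mset" for F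
  proof -
    have "Tu ?p (Tu phi F) = F"
      using tu_comp[OF S(2)] S(3) tu_id(1)[of F] by (simp add: comp_def)
    then have "T F = T' (Tu phi F)" unfolding T'_def by simp
    also have "\<dots> = Td d (Tu phi F)" by (rule T'Td[OF Tu_Mset[OF F S(1)]])
    finally show ?thesis .
  qed
  show ?thesis using dd S(1) phism phisurj final by blast
qed

theorem theorem3:
  fixes T :: "(real \<Rightarrow> real) \<Rightarrow> (real \<Rightarrow> real)"
  assumes "T ` Mset \<subseteq> Mset"
    and "monotone_op T"
  shows "commutes_with_U T \<longleftrightarrow>
         (\<exists>d u. distortion d \<and> utility u \<and> strict_mono u \<and> surj u \<and>
                (\<forall>F\<in>Mset. T F = Td d (Tu u F)))"
  using theorem3_fwd[OF assms] theorem3_rev by blast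

end
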